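(* Let $k\ge 0$. If $\mathcal{M}$ is a matroid whose base configuration $V_{\mathcal{M}}$ has Theta rank at most $k$, then every minor $\mathcal{N}$ of $\mathcal{M}$ has base configuration of Theta rank at most $k$. Likewise, if $V_{\mathcal{M}}$ has levelness at most $k$, then so does $V_{\mathcal{N}}$ for every minor $\mathcal{N}$ of $\mathcal{M}$.
   Context: For a matroid $\mathcal{M}=(E,\mathcal{B})$ with set of bases $\mathcal{B}$, the base configuration is $V_{\mathcal{M}}=\{\mathbf{1}_B:B\in\mathcal{B}\}\subset\mathbb{R}^E$ ($\mathbf{1}_B$ the characteristic vector). Minors are obtained by sequences of deletions and contractions (deleting a coloop $e$ gives bases $\{B\setminus e\}$; contracting a loop is defined dually). A point configuration is a finite set $V\subset\mathbb{R}^n$; a linear function means an affine function. A linear function $\ell$ nonnegative on $V$ is $k$-sos with respect to $V$ if $\ell(v)=\sum_i h_i(v)^2$ for all $v\in V$ for some polynomials $h_i$ of degree $\le k$. The Theta rank of $V$ is the smallest $k\ge 0$ such that every linear function nonnegative on $V$ is $k$-sos. For $\ell$ nonnegative on $V$, $\{v\in V:\ell(v)=0\}$ is a face; inclusion-maximal faces different from $V$ are facets and the corresponding $\ell$ facet-defining. The levelness of $V$ is the smallest $k$ such that every facet-defining linear function takes at most $k$ distinct values on $V$. *)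

theory Defs
  imports Main "HOL-Library.Indicator_Function"
begin

definition matroid :: "'a set \<Rightarrow> 'a set set \<Rightarrow> bool" where
  "matroid E \<B> \<longleftrightarrow> finite E \<and> \<B> \<noteq> {} \<and> (\<forall>B\<in>\<B>. B \<subseteq> E) \<and>
     (\<forall>B1\<in>\<B>. \<forall>B2\<in>\<B>. \<forall>x\<in>B1 - B2. \<exists>y\<in>B2 - B1. insert y (B1 - {x}) \<in> \<B>)"

definition delete_bases :: "'a set set \<Rightarrow> 'a \<Rightarrow> 'a set set" where
  "delete_bases \<B> e =
     (if (\<forall>B\<in>\<B>. e \<in> B) then (\<lambda>B. B - {e}) ` \<B> else {B\<in>\<B>. e \<notin> B})"

definition contract_bases :: "'a set set \<Rightarrow> 'a \<Rightarrow> 'a set set" where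
  "contract_bases \<B> e =
     (if (\<forall>B\<in>\<B>. e \<notin> B) then \<B> else (\<lambda>B. B - {e}) ` {B\<in>\<B>. e \<in> B})"

inductive is_minor :: "'a set \<Rightarrow> 'a set set \<Rightarrow> 'a set \<Rightarrow> 'a set set \<Rightarrow> bool" where
  refl: "is_minor E \<B> E \<B>"
| del: "is_minor E \<B> E' \<B>' \<Longrightarrow> e \<in> E' \<Longrightarrow>
          is_minor E \<B> (E' - {e}) (delete_bases \<B>' e)"
| con: "is_minor E \<B> E' \<B>' \<Longrightarrow> e \<in> E' \<Longrightarrow>
          is_minor E \<B> (E' - {e}) (contract_bases \<B>' e)"

text \<open>Points of R^E are represented as functions 'a \<Rightarrow> real; only the
coordinates in E matter for the functions below.\<close>

definition base_config :: "'a set set \<Rightarrow> ('a \<Rightarrow> real) set" where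
  "base_config \<B> = (\<lambda>B. indicator B) ` \<B>"

definition affine_fun :: "'a set \<Rightarrow> (('a \<Rightarrow> real) \<Rightarrow> real) \<Rightarrow> bool" where
  "affine_fun E l \<longleftrightarrow> (\<exists>c a. \<forall>x. l x = c + (\<Sum>e\<in>E. a e * x e))"

definition poly_fun :: "'a set \<Rightarrow> nat \<Rightarrow> (('a \<Rightarrow> real) \<Rightarrow> real) \<Rightarrow> bool" where
  "poly_fun E k f \<longleftrightarrow> (\<exists>M c. finite M \<and>
      (\<forall>\<alpha>\<in>M. (\<forall>e. e \<notin> E \<longrightarrow> \<alpha> e = 0) \<and> (\<Sum>e\<in>E. \<alpha> e) \<le> k) \<and>
      (\<forall>x. f x = (\<Sum>\<alpha>\<in>M. c \<alpha> * (\<Prod>e\<in>E. x e ^ \<alpha> e))))"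

definition nonneg_on :: "('a \<Rightarrow> real) set \<Rightarrow> (('a \<Rightarrow> real) \<Rightarrow> real) \<Rightarrow> bool" where
  "nonneg_on V l \<longleftrightarrow> (\<forall>v\<in>V. 0 \<le> l v)"

definition k_sos :: "'a set \<Rightarrow> nat \<Rightarrow> ('a \<Rightarrow> real) set \<Rightarrow> (('a \<Rightarrow> real) \<Rightarrow> real) \<Rightarrow> bool" where
  "k_sos E k V l \<longleftrightarrow> (\<exists>hs. (\<forall>h\<in>set hs. poly_fun E k h) \<and>
      (\<forall>v\<in>V. l v = (\<Sum>h\<leftarrow>hs. (h v)\<^sup>2)))"

definition theta_rank :: "'a set \<Rightarrow> ('a \<Rightarrow> real) set \<Rightarrow> nat" where
  "theta_rank E V = (LEAST k. \<forall>l. affine_fun E l \<and> nonneg_on V l \<longrightarrow> k_sos E k V l)"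

definition face :: "'a set \<Rightarrow> ('a \<Rightarrow> real) set \<Rightarrow> ('a \<Rightarrow> real) set \<Rightarrow> bool" where
  "face E V F \<longleftrightarrow> (\<exists>l. affine_fun E l \<and> nonneg_on V l \<and> F = {v\<in>V. l v = 0})"

definition facet :: "'a set \<Rightarrow> ('a \<Rightarrow> real) set \<Rightarrow> ('a \<Rightarrow> real) set \<Rightarrow> bool" where
  "facet E V F \<longleftrightarrow> face E V F \<and> F \<noteq> V \<and>
      (\<forall>G. face E V G \<and> G \<noteq> V \<and> F \<subseteq> G \<longrightarrow> G = F)"

definition facet_defining :: "'a set \<Rightarrow> ('a \<Rightarrow> real) set \<Rightarrow> (('a \<Rightarrow> real) \<Rightarrow> real) \<Rightarrow> bool" where
  "facet_defining E V l \<longleftrightarrow> affine_fun E l \<and> nonneg_on V l \<and> facet E V {v\<in>V. l v = 0}"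

definition levelness :: "'a set \<Rightarrow> ('a \<Rightarrow> real) set \<Rightarrow> nat" where
  "levelness E V = (LEAST k. \<forall>l. facet_defining E V l \<longrightarrow> card (l ` V) \<le> k)"

end

theory Submission
  imports Defs
begin

lemma poly_monom:
  assumes "\<forall>d. d \<notin> E \<longrightarrow> \<alpha> d = 0" "(\<Sum>d\<in>E. \<alpha> d) \<le> k"
  shows "poly_fun E k (\<lambda>x. a * (\<Prod>d\<in>E. x d ^ \<alpha> d))"
  unfolding poly_fun_def
  by (rule exI[of _ "{\<alpha>}"], rule exI[of _ "\<lambda>_. a"]) (use assms in auto)

lemma poly_zero: "poly_fun E k (\<lambda>x. 0)"
  unfolding poly_fun_def by (rule exI[of _ "{}"]) auto

lemma poly_add:
  assumes "poly_fun E k f" "poly_fun E k g"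
  shows "poly_fun E k (\<lambda>x. f x + g x)"
proof -
  obtain M1 c1 where m1: "finite M1" "\<forall>\<alpha>\<in>M1. (\<forall>e. e \<notin> E \<longrightarrow> \<alpha> e = 0) \<and> (\<Sum>e\<in>E. \<alpha> e) \<le> k"
    "\<forall>x. f x = (\<Sum>\<alpha>\<in>M1. c1 \<alpha> * (\<Prod>e\<in>E. x e ^ \<alpha> e))" using assms(1) unfolding poly_fun_def by blast
  obtain M2 c2 where m2: "finite M2" "\<forall>\<alpha>\<in>M2. (\<forall>e. e \<notin> E \<longrightarrow> \<alpha> e = 0) \<and> (\<Sum>e\<in>E. \<alpha> e) \<le> k"
    "\<forall>x. g x = (\<Sum>\<alpha>\<in>M2. c2 \<alpha> * (\<Prod>e\<in>E. x e ^ \<alpha> e))" using assms(2) unfolding poly_fun_def by blast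
  define c where "c \<alpha> = (if \<alpha> \<in> M1 then c1 \<alpha> else 0) + (if \<alpha> \<in> M2 then c2 \<alpha> else 0)" for \<alpha>
  have "f x + g x = (\<Sum>\<alpha>\<in>M1 \<union> M2. c \<alpha> * (\<Prod>e\<in>E. x e ^ \<alpha> e))" for x
  proof -
    have s1: "(\<Sum>\<alpha>\<in>M1 \<union> M2. (if \<alpha> \<in> M1 then c1 \<alpha> else 0) * (\<Prod>e\<in>E. x e ^ \<alpha> e))
        = (\<Sum>\<alpha>\<in>M1. c1 \<alpha> * (\<Prod>e\<in>E. x e ^ \<alpha> e))"
      by (rule sum.mono_neutral_cong_right) (use m1 m2 in auto)
    have s2: "(\<Sum>\<alpha>\<in>M1 \<union> M2. (if \<alpha> \<in> M2 then c2 \<alpha> else 0) * (\<Prod>e\<in>E. x e ^ \<alpha> e))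
        = (\<Sum>\<alpha>\<in>M2. c2 \<alpha> * (\<Prod>e\<in>E. x e ^ \<alpha> e))"
      by (rule sum.mono_neutral_cong_right) (use m1 m2 in auto)
    show ?thesis unfolding c_def distrib_right sum.distrib s1 s2 using m1 m2 by simp
  qed
  then show ?thesis unfolding poly_fun_def using m1 m2
    by (intro exI[of _ "M1 \<union> M2"] exI[of _ c]) auto
qed

lemma poly_sum:
  assumes "finite S" "\<forall>i\<in>S. poly_fun E k (f i)"
  shows "poly_fun E k (\<lambda>x. \<Sum>i\<in>S. f i x)"
  using assms
proof (induction S rule: finite_induct)
  case empty then show ?case using poly_zero by simp
next
  case (insert i S)
  then show ?case using poly_add[of E k "f i" "\<lambda>x. \<Sum>i\<in>S. f i x"] by simp
qed

lemma poly_mono_deg: "poly_fun E k f \<Longrightarrow> k \<le> k' \<Longrightarrow> poly_fun E k' f"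
  unfolding poly_fun_def by (meson order_trans)

lemma poly_mult:
  assumes "poly_fun E a f" "poly_fun E b g"
  shows "poly_fun E (a + b) (\<lambda>x. f x * g x)"
proof -
  obtain M1 c1 where m1: "finite M1" "\<forall>\<alpha>\<in>M1. (\<forall>e. e \<notin> E \<longrightarrow> \<alpha> e = 0) \<and> (\<Sum>e\<in>E. \<alpha> e) \<le> a"
    "\<forall>x. f x = (\<Sum>\<alpha>\<in>M1. c1 \<alpha> * (\<Prod>e\<in>E. x e ^ \<alpha> e))" using assms(1) unfolding poly_fun_def by blast
  obtain M2 c2 where m2: "finite M2" "\<forall>\<alpha>\<in>M2. (\<forall>e. e \<notin> E \<longrightarrow> \<alpha> e = 0) \<and> (\<Sum>e\<in>E. \<alpha> e) \<le> b"
    "\<forall>x. g x = (\<Sum>\<alpha>\<in>M2. c2 \<alpha> * (\<Prod>e\<in>E. x e ^ \<alpha> e))" using assms(2) unfolding poly_fun_def by blast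
  have eq: "f x * g x = (\<Sum>\<alpha>\<in>M1. \<Sum>\<beta>\<in>M2. (c1 \<alpha> * c2 \<beta>) * (\<Prod>e\<in>E. x e ^ (\<alpha> e + \<beta> e)))" for x
    unfolding m1(3)[rule_format] m2(3)[rule_format] sum_product power_add prod.distrib
    by (rule sum.cong[OF HOL.refl], rule sum.cong[OF HOL.refl]) (simp add: algebra_simps)
  have "poly_fun E (a + b) (\<lambda>x. \<Sum>\<alpha>\<in>M1. \<Sum>\<beta>\<in>M2. (c1 \<alpha> * c2 \<beta>) * (\<Prod>e\<in>E. x e ^ (\<alpha> e + \<beta> e)))"
  proof (rule poly_sum[OF m1(1)], rule ballI)
    fix \<alpha> assume a: "\<alpha> \<in> M1"
    show "poly_fun E (a + b) (\<lambda>x. \<Sum>\<beta>\<in>M2. (c1 \<alpha> * c2 \<beta>) * (\<Prod>e\<in>E. x e ^ (\<alpha> e + \<beta> e)))"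
    proof (rule poly_sum[OF m2(1)], rule ballI)
      fix \<beta> assume b: "\<beta> \<in> M2"
      show "poly_fun E (a + b) (\<lambda>x. (c1 \<alpha> * c2 \<beta>) * (\<Prod>e\<in>E. x e ^ (\<alpha> e + \<beta> e)))"
        using poly_monom[of E "\<lambda>e. \<alpha> e + \<beta> e" "a + b" "c1 \<alpha> * c2 \<beta>"] m1(2) m2(2) a b
        by (simp add: sum.distrib add_mono)
    qed
  qed
  then show ?thesis using eq by simp
qed

lemma poly_const: "poly_fun E k (\<lambda>x. a)"
  using poly_monom[of E "\<lambda>_. 0" k a] by simp

lemma poly_coord:
  assumes "d \<in> E" "finite E"
  shows "poly_fun E 1 (\<lambda>x. b * x d)"
proof -
  have "(\<Prod>e\<in>E. x e ^ (if e = d then 1 else 0)) = x d" for x :: "'a \<Rightarrow> real"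
  proof -
    have "(\<Prod>e\<in>E. x e ^ (if e = d then 1 else 0)) = (\<Prod>e\<in>E. if e = d then x e else 1)"
      by (rule prod.cong) auto
    also have "\<dots> = x d" using assms by (simp add: prod.delta)
    finally show ?thesis .
  qed
  then show ?thesis using poly_monom[of E "\<lambda>e. if e = d then 1 else 0" 1 b] assms
    by (simp add: sum.delta)
qed

lemma poly_prod:
  assumes "finite S" "\<forall>i\<in>S. poly_fun E 1 (f i)"
  shows "poly_fun E (card S) (\<lambda>x. \<Prod>i\<in>S. f i x)"
  using assms
proof (induction S rule: finite_induct)
  case empty then show ?case using poly_const[of E 0 1] by simp
next
  case (insert i S)
  then show ?case using poly_mult[of E 1 "f i" "card S" "\<lambda>x. \<Prod>i\<in>S. f i x"] by simp
qed

lemma poly_subst: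
  assumes "poly_fun E k h" "finite E" "e \<in> E"
  shows "poly_fun (E - {e}) k (\<lambda>x. h (x(e := a)))"
proof -
  obtain M c where m: "finite M" "\<forall>\<alpha>\<in>M. (\<forall>e. e \<notin> E \<longrightarrow> \<alpha> e = 0) \<and> (\<Sum>e\<in>E. \<alpha> e) \<le> k"
    "\<forall>x. h x = (\<Sum>\<alpha>\<in>M. c \<alpha> * (\<Prod>e\<in>E. x e ^ \<alpha> e))" using assms(1) unfolding poly_fun_def by blast
  have eq: "h (x(e := a)) = (\<Sum>\<alpha>\<in>M. (c \<alpha> * a ^ \<alpha> e) * (\<Prod>d\<in>E - {e}. x d ^ (\<alpha>(e := 0)) d))" for x
    unfolding m(3)[rule_format]
  proof (rule sum.cong[OF HOL.refl])
    fix \<alpha>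
    have "(\<Prod>d\<in>E. (x(e := a)) d ^ \<alpha> d) = a ^ \<alpha> e * (\<Prod>d\<in>E - {e}. (x(e := a)) d ^ \<alpha> d)"
      using assms by (simp add: prod.remove)
    also have "(\<Prod>d\<in>E - {e}. (x(e := a)) d ^ \<alpha> d) = (\<Prod>d\<in>E - {e}. x d ^ (\<alpha>(e := 0)) d)"
      by (rule prod.cong) auto
    finally show "c \<alpha> * (\<Prod>d\<in>E. (x(e := a)) d ^ \<alpha> d) = c \<alpha> * a ^ \<alpha> e * (\<Prod>d\<in>E - {e}. x d ^ (\<alpha>(e := 0)) d)"
      by simp
  qed
  have "poly_fun (E - {e}) k (\<lambda>x. \<Sum>\<alpha>\<in>M. (c \<alpha> * a ^ \<alpha> e) * (\<Prod>d\<in>E - {e}. x d ^ (\<alpha>(e := 0)) d))"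
  proof (rule poly_sum[OF m(1)], rule ballI)
    fix \<alpha> assume al: "\<alpha> \<in> M"
    have "(\<Sum>d\<in>E - {e}. (\<alpha>(e := 0)) d) = (\<Sum>d\<in>E - {e}. \<alpha> d)" by (rule sum.cong) auto
    also have "\<dots> \<le> (\<Sum>d\<in>E. \<alpha> d)" using assms(2) by (intro sum_mono2) auto
    finally have "(\<Sum>d\<in>E - {e}. (\<alpha>(e := 0)) d) \<le> k" using m(2) al order.trans by blast
    then show "poly_fun (E - {e}) k (\<lambda>x. (c \<alpha> * a ^ \<alpha> e) * (\<Prod>d\<in>E - {e}. x d ^ (\<alpha>(e := 0)) d))"
      using m(2) al by (intro poly_monom) auto
  qed
  then show ?thesis using eq by simp
qed

lemma affine_sub:
  assumes "affine_fun E' l" "E' \<subseteq> E" "finite E"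
  shows "affine_fun E l"
proof -
  obtain c a where l: "\<forall>x. l x = c + (\<Sum>e\<in>E'. a e * x e)" using assms(1) unfolding affine_fun_def by blast
  have "(\<Sum>d\<in>E. (if d \<in> E' then a d else 0) * x d) = (\<Sum>d\<in>E'. a d * x d)" for x
    by (rule sum.mono_neutral_cong_right) (use assms in auto)
  then show ?thesis unfolding affine_fun_def using l
    by (intro exI[of _ c] exI[of _ "\<lambda>d. if d \<in> E' then a d else 0"]) auto
qed

lemma affine_indep:
  assumes "affine_fun E' l" "e \<notin> E'"
  shows "l (x(e := a)) = l x"
proof -
  obtain c b where l: "\<forall>x. l x = c + (\<Sum>e\<in>E'. b e * x e)" using assms(1) unfolding affine_fun_def by blast
  have "(\<Sum>d\<in>E'. b d * (x(e := a)) d) = (\<Sum>d\<in>E'. b d * x d)" by (rule sum.cong) (use assms in auto)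
  then show ?thesis using l by simp
qed

lemma affine_subst:
  assumes "affine_fun E l" "finite E" "e \<in> E"
  shows "affine_fun (E - {e}) (\<lambda>x. l (x(e := a)))"
proof -
  obtain c b where l: "\<forall>x. l x = c + (\<Sum>e\<in>E. b e * x e)" using assms(1) unfolding affine_fun_def by blast
  have "l (x(e := a)) = (c + b e * a) + (\<Sum>d\<in>E - {e}. b d * x d)" for x
  proof -
    have "(\<Sum>d\<in>E. b d * (x(e := a)) d) = b e * a + (\<Sum>d\<in>E - {e}. b d * (x(e := a)) d)"
      using assms by (simp add: sum.remove)
    also have "(\<Sum>d\<in>E - {e}. b d * (x(e := a)) d) = (\<Sum>d\<in>E - {e}. b d * x d)" by (rule sum.cong) auto
    finally show ?thesis using l by simp
  qed
  then show ?thesis unfolding affine_fun_def by blast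
qed

lemma affine_comb:
  assumes "affine_fun E p" "affine_fun E q"
  shows "affine_fun E (\<lambda>x. p x + t * q x)"
proof -
  obtain c1 a1 where p: "\<forall>x. p x = c1 + (\<Sum>e\<in>E. a1 e * x e)" using assms(1) unfolding affine_fun_def by blast
  obtain c2 a2 where q: "\<forall>x. q x = c2 + (\<Sum>e\<in>E. a2 e * x e)" using assms(2) unfolding affine_fun_def by blast
  have "p x + t * q x = (c1 + t * c2) + (\<Sum>e\<in>E. (a1 e + t * a2 e) * x e)" for x
    using p q by (simp add: algebra_simps sum.distrib sum_distrib_left)
  then show ?thesis unfolding affine_fun_def by (intro exI[of _ "c1 + t * c2"] exI[of _ "\<lambda>e. a1 e + t * a2 e"]) auto
qed

lemma affine_coord:
  assumes "e \<in> E" "finite E"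
  shows "affine_fun E (\<lambda>x. c + b * x e)"
proof -
  have "(\<Sum>d\<in>E. (if d = e then b else 0) * x d) = b * x e" for x :: "'a \<Rightarrow> real"
  proof -
    have "(\<Sum>d\<in>E. (if d = e then b else 0) * x d) = (\<Sum>d\<in>E. if d = e then b * x d else 0)"
      by (rule sum.cong) auto
    then show ?thesis using assms by (simp add: sum.delta)
  qed
  then show ?thesis unfolding affine_fun_def by metis
qed


definition Pth :: "nat \<Rightarrow> 'a set \<Rightarrow> ('a \<Rightarrow> real) set \<Rightarrow> bool" where
  "Pth k E V \<longleftrightarrow> (\<forall>l. affine_fun E l \<and> nonneg_on V l \<longrightarrow> k_sos E k V l)"

definition Plev :: "nat \<Rightarrow> 'a set \<Rightarrow> ('a \<Rightarrow> real) set \<Rightarrow> bool" where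
  "Plev k E V \<longleftrightarrow> (\<forall>l. facet_defining E V l \<longrightarrow> card (l ` V) \<le> k)"

lemma Pth_mono: "Pth k E V \<Longrightarrow> k \<le> k' \<Longrightarrow> Pth k' E V"
  unfolding Pth_def k_sos_def by (meson poly_mono_deg)

lemma Plev_mono: "Plev k E V \<Longrightarrow> k \<le> k' \<Longrightarrow> Plev k' E V"
  unfolding Plev_def by (meson order.trans)

lemma Plev_ex: "finite V \<Longrightarrow> Plev (card V) E V"
  unfolding Plev_def by (simp add: card_image_le)

lemma Pth_ex:
  assumes fin: "finite E" and sub: "\<forall>B\<in>Bs. B \<subseteq> E" and finB: "finite Bs"
  shows "Pth (card E) E (base_config Bs)"
  unfolding Pth_def
proof (intro allI impI)
  fix l assume "affine_fun E l \<and> nonneg_on (base_config Bs) l"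
  then have nn: "\<forall>B\<in>Bs. 0 \<le> l (indicator B)" unfolding nonneg_on_def base_config_def by auto
  define \<delta> where "\<delta> B x = (\<Prod>d\<in>E. if d \<in> B then x d else 1 - x d)" for B and x :: "'a \<Rightarrow> real"
  define g where "g x = (\<Sum>B\<in>Bs. sqrt (l (indicator B)) * \<delta> B x)" for x
  have pd: "poly_fun E (card E) (\<delta> B)" for B
    unfolding \<delta>_def
  proof (rule poly_prod[OF fin], rule ballI)
    fix d assume d: "d \<in> E"
    show "poly_fun E 1 (\<lambda>x. if d \<in> B then x d else 1 - x d)"
    proof (cases "d \<in> B")
      case True then show ?thesis using poly_coord[OF d fin, of 1] by simp
    next
      case False then show ?thesis
        using poly_add[OF poly_const[of E 1 1] poly_coord[OF d fin, of "-1"]] by simp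
    qed
  qed
  have pg: "poly_fun E (card E) g"
    unfolding g_def
  proof (rule poly_sum[OF finB], rule ballI)
    fix B
    show "poly_fun E (card E) (\<lambda>x. sqrt (l (indicator B)) * \<delta> B x)"
      using poly_mult[OF poly_const[of E 0 "sqrt (l (indicator B))"] pd[of B]] by simp
  qed
  have dv: "\<delta> B (indicator B') = (if B = B' then 1 else 0)" if "B \<in> Bs" "B' \<in> Bs" for B B'
  proof (cases "B = B'")
    case True
    have "(\<Prod>d\<in>E. if d \<in> B then (indicator B' d::real) else 1 - indicator B' d) = (\<Prod>d\<in>E. 1)"
      by (rule prod.cong) (use True in auto)
    then show ?thesis unfolding \<delta>_def using True by simp
  next
    case False
    then obtain d where d0: "(d \<in> B) \<noteq> (d \<in> B')" by blast
    have d: "d \<in> E" "(d \<in> B) \<noteq> (d \<in> B')" using d0 sub that by auto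
    have "(if d \<in> B then (indicator B' d::real) else 1 - indicator B' d) = 0"
      using d(2) by (cases "d \<in> B") (auto simp: indicator_def)
    then have "\<delta> B (indicator B') = 0" unfolding \<delta>_def using fin d(1)
      by (subst prod_zero_iff) blast+
    then show ?thesis using False by simp
  qed
  have gv: "g (indicator B') = sqrt (l (indicator B'))" if "B' \<in> Bs" for B'
  proof -
    have "g (indicator B') = (\<Sum>B\<in>Bs. if B = B' then sqrt (l (indicator B)) else 0)"
      unfolding g_def by (rule sum.cong[OF HOL.refl]) (simp add: dv that)
    also have "\<dots> = sqrt (l (indicator B'))" using finB that by (simp add: sum.delta')
    finally show ?thesis .
  qed
  show "k_sos E (card E) (base_config Bs) l"
    unfolding k_sos_def
    by (rule exI[of _ "[g]"]) (use pg gv nn in \<open>auto simp: base_config_def\<close>)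
qed


lemma face_sub: "face E V G \<Longrightarrow> G \<subseteq> V"
  unfolding face_def by auto

lemma step_theta:
  fixes E :: "'a set" and V :: "('a \<Rightarrow> real) set" and c :: real
  assumes fin: "finite E" and e: "e \<in> E" and finV: "finite V"
    and V01: "\<forall>v\<in>V. v e = 0 \<or> v e = 1" and c01: "c = 0 \<or> c = 1"
    and H: "Pth k E V"
  shows "Pth k (E - {e}) ((\<lambda>v. v(e := 0)) ` {v\<in>V. v e = c})"
  unfolding Pth_def
proof (intro allI impI)
  define V' where "V' = (\<lambda>v. v(e := 0)) ` {v\<in>V. v e = c}"
  fix l assume "affine_fun (E - {e}) l \<and> nonneg_on ((\<lambda>v. v(e := 0)) ` {v\<in>V. v e = c}) l"
  then have aff: "affine_fun (E - {e}) l" and nn: "\<forall>w\<in>V'. 0 \<le> l w"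
    unfolding V'_def nonneg_on_def by auto
  have indep: "l (x(e := a)) = l x" for x a using affine_indep[OF aff] by simp
  define f where "f x = c + (1 - 2 * c) * x e" for x :: "'a \<Rightarrow> real"
  have f0: "f v = 0" if "v \<in> V" "v e = c" for v using that c01 unfolding f_def by auto
  have f1: "f v = 1" if "v \<in> V" "v e \<noteq> c" for v using that c01 V01 unfolding f_def by auto
  define t where "t = (\<Sum>v\<in>V. \<bar>l v\<bar>)"
  have lt: "- l v \<le> t" if "v \<in> V" for v
  proof -
    have "\<bar>l v\<bar> \<le> t" unfolding t_def using that finV by (intro member_le_sum) auto
    then show ?thesis by linarith
  qed
  define L where "L x = l x + t * f x" for x
  have affL: "affine_fun E L"
    unfolding L_def f_def
    by (rule affine_comb[OF affine_sub[OF aff _ fin] affine_coord[OF e fin]]) auto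
  have nnL: "nonneg_on V L" unfolding nonneg_on_def
  proof
    fix v assume v: "v \<in> V"
    show "0 \<le> L v"
    proof (cases "v e = c")
      case True
      have "v(e := 0) \<in> V'" unfolding V'_def using v True by auto
      then have "0 \<le> l v" using nn indep[of v 0] by metis
      then show ?thesis unfolding L_def using f0[OF v True] by simp
    next
      case False then show ?thesis unfolding L_def using f1[OF v False] lt[OF v] by simp
    qed
  qed
  obtain hs where hs: "\<forall>h\<in>set hs. poly_fun E k h" "\<forall>v\<in>V. L v = (\<Sum>h\<leftarrow>hs. (h v)\<^sup>2)"
    using H affL nnL unfolding Pth_def k_sos_def by blast
  show "k_sos (E - {e}) k ((\<lambda>v. v(e := 0)) ` {v\<in>V. v e = c}) l"
    unfolding k_sos_def
  proof (intro exI[of _ "map (\<lambda>h x. h (x(e := c))) hs"] conjI ballI)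
    fix h assume "h \<in> set (map (\<lambda>h x. h (x(e := c))) hs)"
    then show "poly_fun (E - {e}) k h" using hs(1) poly_subst[OF _ fin e] by auto
  next
    fix w assume "w \<in> (\<lambda>v. v(e := 0)) ` {v\<in>V. v e = c}"
    then obtain v where v: "v \<in> V" "v e = c" "w = v(e := 0)" by auto
    have bk: "w(e := c) = v" using v by auto
    have "l w = L v" unfolding L_def using v f0[OF v(1,2)] indep[of v 0] by simp
    also have "\<dots> = (\<Sum>h\<leftarrow>hs. (h v)\<^sup>2)" using hs(2) v by simp
    finally show "l w = (\<Sum>h\<leftarrow>map (\<lambda>h x. h (x(e := c))) hs. (h w)\<^sup>2)"
      using bk by (simp add: o_def)
  qed
qed

lemma step_lev:
  fixes E :: "'a set" and V :: "('a \<Rightarrow> real) set" and c :: real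
  assumes fin: "finite E" and e: "e \<in> E" and finV: "finite V"
    and V01: "\<forall>v\<in>V. v e = 0 \<or> v e = 1" and c01: "c = 0 \<or> c = 1"
    and fd: "facet_defining (E - {e}) ((\<lambda>v. v(e := 0)) ` {v\<in>V. v e = c}) l'"
  shows "\<exists>l. facet_defining E V l \<and> card (l' ` ((\<lambda>v. v(e := 0)) ` {v\<in>V. v e = c})) \<le> card (l ` V)"
proof -
  define F where "F = {v\<in>V. v e = c}"
  define V' where "V' = (\<lambda>v. v(e := 0)) ` F"
  define Z' where "Z' = {w\<in>V'. l' w = 0}"
  define ZF where "ZF = {v\<in>F. l' v = 0}"
  have FV: "F \<subseteq> V" unfolding F_def by auto
  have finF: "finite F" using finV FV finite_subset by blast
  have aff': "affine_fun (E - {e}) l'" and nn': "\<forall>w\<in>V'. 0 \<le> l' w" and fct: "facet (E - {e}) V' Z'"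
    using fd unfolding facet_defining_def nonneg_on_def V'_def F_def Z'_def by auto
  have indep: "l' (x(e := a)) = l' x" for x a using affine_indep[OF aff'] by simp
  have bk: "(v(e := 0))(e := c) = v" if "v \<in> F" for v using that unfolding F_def by auto
  have psiF: "v(e := 0) \<in> V'" if "v \<in> F" for v using that unfolding V'_def by auto
  have lF: "0 \<le> l' v" if "v \<in> F" for v using nn' psiF[OF that] indep[of v 0] by metis
  have affE: "affine_fun E l'" by (rule affine_sub[OF aff' _ fin]) auto
  have ZFF: "ZF \<subseteq> F" unfolding ZF_def by auto
  have P: "(\<forall>v\<in>F. g v = 0) \<or> {v\<in>F. g v = 0} = ZF"
    if g: "affine_fun E g" "\<forall>v\<in>F. 0 \<le> g v" "\<forall>v\<in>ZF. g v = 0" for g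
  proof -
    define g' where "g' x = g (x(e := c))" for x
    have affg': "affine_fun (E - {e}) g'" unfolding g'_def by (rule affine_subst[OF g(1) fin e])
    have g'v: "g' (v(e := 0)) = g v" if "v \<in> F" for v unfolding g'_def using bk[OF that] by simp
    have nng': "nonneg_on V' g'" unfolding nonneg_on_def V'_def using g'v g(2) by auto
    define G' where "G' = {w\<in>V'. g' w = 0}"
    have faceG: "face (E - {e}) V' G'" unfolding face_def G'_def using affg' nng' by blast
    have ZG: "Z' \<subseteq> G'"
    proof
      fix w assume "w \<in> Z'"
      then obtain v where v: "v \<in> F" "w = v(e := 0)" "l' w = 0" unfolding Z'_def V'_def by auto
      have "l' v = 0" using v indep[of v 0] by simp
      then have "v \<in> ZF" using v unfolding ZF_def by simp
      then show "w \<in> G'" unfolding G'_def using g(3) g'v v psiF by simp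
    qed
    have "G' = V' \<or> G' = Z'" using fct faceG ZG unfolding facet_def by blast
    then show ?thesis
    proof
      assume "G' = V'"
      have "\<forall>v\<in>F. g v = 0"
      proof
        fix v assume v: "v \<in> F"
        have "v(e := 0) \<in> G'" using \<open>G' = V'\<close> psiF[OF v] by simp
        then show "g v = 0" unfolding G'_def using g'v[OF v] by simp
      qed
      then show ?thesis by blast
    next
      assume GZ: "G' = Z'"
      have "{v\<in>F. g v = 0} \<subseteq> ZF"
      proof
        fix v assume v: "v \<in> {v\<in>F. g v = 0}"
        then have "v(e := 0) \<in> G'" unfolding G'_def using psiF g'v by simp
        then have "l' (v(e := 0)) = 0" using GZ unfolding Z'_def by simp
        then show "v \<in> ZF" using v indep[of v 0] unfolding ZF_def by simp
      qed
      moreover have "ZF \<subseteq> {v\<in>F. g v = 0}" using g(3) ZFF by auto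
      ultimately show ?thesis by blast
    qed
  qed
  have ZFne: "ZF \<noteq> F"
  proof
    assume "ZF = F"
    then have "Z' = V'" unfolding Z'_def V'_def ZF_def using indep by auto
    then show False using fct unfolding facet_def by simp
  qed
  have A: "card (g ` F) = card (l' ` F)"
    if g: "affine_fun E g" "\<forall>v\<in>F. 0 \<le> g v" "{v\<in>F. g v = 0} = ZF" for g
  proof -
    define D where "D = F - ZF"
    have Dne: "D \<noteq> {}" "finite D" unfolding D_def using ZFne ZFF finF by auto
    have lpos: "0 < l' v" if "v \<in> D" for v
      using that lF unfolding D_def ZF_def by (simp add: order_less_le)
    have gpos: "0 < g v" if "v \<in> D" for v
      using that g(2,3) unfolding D_def by (auto simp: order_less_le)
    define s where "s = Min ((\<lambda>v. g v / l' v) ` D)"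
    have "s \<in> (\<lambda>v. g v / l' v) ` D" unfolding s_def by (rule Min_in) (use Dne in auto)
    then obtain v0 where v0: "v0 \<in> D" "s = g v0 / l' v0" by auto
    have sle: "s \<le> g v / l' v" if "v \<in> D" for v unfolding s_def using Dne that by simp
    have spos: "0 < s" using v0 gpos lpos by simp
    define r where "r x = g x + (- s) * l' x" for x
    have affr: "affine_fun E r" unfolding r_def by (rule affine_comb[OF g(1) affE])
    have rnn: "\<forall>v\<in>F. 0 \<le> r v"
    proof
      fix v assume v: "v \<in> F"
      show "0 \<le> r v"
      proof (cases "v \<in> ZF")
        case True
        then have "l' v = 0" unfolding ZF_def by simp
        moreover have "g v = 0" using True g(3) by blast
        ultimately have "g v = 0" "l' v = 0" by auto
        then show ?thesis unfolding r_def by simp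
      next
        case False
        then have vD: "v \<in> D" unfolding D_def using v by simp
        have "s * l' v \<le> g v" using sle[OF vD] lpos[OF vD] by (simp add: pos_le_divide_eq)
        then show ?thesis unfolding r_def by simp
      qed
    qed
    have rZ: "\<forall>v\<in>ZF. r v = 0"
    proof
      fix v assume v: "v \<in> ZF"
      have "l' v = 0" using v unfolding ZF_def by simp
      moreover have "g v = 0" using v g(3) by blast
      ultimately show "r v = 0" unfolding r_def by simp
    qed
    have "r v0 = 0" unfolding r_def using v0 lpos[OF v0(1)] by simp
    moreover have "v0 \<in> F" "v0 \<notin> ZF" using v0 unfolding D_def by auto
    ultimately have "\<forall>v\<in>F. r v = 0" using P[OF affr rnn rZ] by blast
    then have geq: "\<forall>v\<in>F. g v = s * l' v" unfolding r_def by auto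
    have "g ` F = (\<lambda>y. s * y) ` (l' ` F)" using geq by (auto simp: image_iff)
    moreover have "inj_on (\<lambda>y. s * y) (l' ` F)" using spos by (auto simp: inj_on_def)
    ultimately show ?thesis by (simp add: card_image)
  qed
  have cardV': "l' ` V' = l' ` F" unfolding V'_def using indep by (auto simp: image_iff)
  define f where "f x = c + (1 - 2 * c) * x e" for x :: "'a \<Rightarrow> real"
  have f0: "f v = 0" if "v \<in> F" for v using that c01 unfolding f_def F_def by auto
  have f1: "f v = 1" if "v \<in> V" "v \<notin> F" for v using that c01 V01 unfolding f_def F_def by auto
  have afff: "affine_fun E f" unfolding f_def by (rule affine_coord[OF e fin])
  define S where "S = {G. face E V G \<and> G \<noteq> V \<and> G \<inter> F = ZF}"
  have ZFS: "ZF \<in> S"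
  proof -
    define t where "t = 1 + (\<Sum>v\<in>V. \<bar>l' v\<bar>)"
    have lt: "- l' v < t" if "v \<in> V" for v
    proof -
      have "\<bar>l' v\<bar> \<le> (\<Sum>v\<in>V. \<bar>l' v\<bar>)" using that finV by (intro member_le_sum) auto
      then show ?thesis unfolding t_def by linarith
    qed
    define L where "L x = l' x + t * f x" for x
    have affL: "affine_fun E L" unfolding L_def by (rule affine_comb[OF affE afff])
    have Lpos: "0 < L v" if "v \<in> V" "v \<notin> F" for v unfolding L_def using f1[OF that] lt[OF that(1)] by simp
    have LF: "L v = l' v" if "v \<in> F" for v unfolding L_def using f0[OF that] by simp
    have nnL: "nonneg_on V L" unfolding nonneg_on_def
      using Lpos LF lF by (metis less_imp_le)
    have "{v\<in>V. L v = 0} = ZF" unfolding ZF_def using Lpos LF FV by (auto, force+)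
    then have "face E V ZF" unfolding face_def using affL nnL by metis
    moreover have "ZF \<noteq> V" using ZFne ZFF FV by blast
    ultimately show ?thesis unfolding S_def using ZFF by blast
  qed
  have SP: "S \<subseteq> Pow V" unfolding S_def using face_sub by blast
  have finS: "finite S" using SP finV finite_subset by blast
  define m where "m = Max (card ` S)"
  have "m \<in> card ` S" unfolding m_def by (rule Max_in) (use finS ZFS in auto)
  then obtain G where G: "G \<in> S" "card G = m" by auto
  have maxG: "card G' \<le> card G" if "G' \<in> S" for G' using that finS G(2) unfolding m_def by simp
  have GV: "G \<subseteq> V" using G SP by blast
  obtain h where h: "affine_fun E h" "nonneg_on V h" "G = {v\<in>V. h v = 0}"
    using G unfolding S_def face_def by blast
  have GF: "G \<inter> F = ZF" using G unfolding S_def by simp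
  have facetG: "facet E V G"
    unfolding facet_def
  proof (intro conjI allI impI)
    show "face E V G" "G \<noteq> V" using G unfolding S_def by auto
  next
    fix K assume K: "face E V K \<and> K \<noteq> V \<and> G \<subseteq> K"
    show "K = G"
    proof (rule ccontr)
      assume KG: "K \<noteq> G"
      then have Gss: "G \<subset> K" using K by blast
      have KV: "K \<subseteq> V" using K face_sub by blast
      have finK: "finite K" using KV finV finite_subset by blast
      obtain k where k: "affine_fun E k" "nonneg_on V k" "K = {v\<in>V. k v = 0}"
        using K unfolding face_def by blast
      have kF: "\<forall>v\<in>F. 0 \<le> k v" using k(2) FV unfolding nonneg_on_def by auto
      have kZ: "\<forall>v\<in>ZF. k v = 0" using GF K k(3) by blast
      from P[OF k(1) kF kZ] show False
      proof
        assume FK: "\<forall>v\<in>F. k v = 0"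
        define W where "W = V - K"
        have Wne: "W \<noteq> {}" "finite W" unfolding W_def using KV K finV by auto
        have kpos: "0 < k v" if "v \<in> W" for v
          using that k(2,3) unfolding W_def nonneg_on_def by (auto simp: order_less_le)
        define s where "s = Min ((\<lambda>v. h v / k v) ` W)"
        have "s \<in> (\<lambda>v. h v / k v) ` W" unfolding s_def by (rule Min_in) (use Wne in auto)
        then obtain v0 where v0: "v0 \<in> W" "s = h v0 / k v0" by auto
        have sle: "s \<le> h v / k v" if "v \<in> W" for v unfolding s_def using Wne that by simp
        define r where "r x = h x + (- s) * k x" for x
        have affr: "affine_fun E r" unfolding r_def by (rule affine_comb[OF h(1) k(1)])
        have rnn: "nonneg_on V r" unfolding nonneg_on_def
        proof
          fix v assume v: "v \<in> V"
          show "0 \<le> r v"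
          proof (cases "v \<in> K")
            case True then show ?thesis using h(2) v k(3) unfolding r_def nonneg_on_def by auto
          next
            case False
            then have vW: "v \<in> W" unfolding W_def using v by simp
            have "s * k v \<le> h v" using sle[OF vW] kpos[OF vW] by (simp add: pos_le_divide_eq)
            then show ?thesis unfolding r_def by simp
          qed
        qed
        define H' where "H' = {v\<in>V. r v = 0}"
        have faceH: "face E V H'" unfolding face_def H'_def using affr rnn by blast
        obtain u where u: "u \<in> K" "u \<notin> G" using Gss by blast
        have "u \<in> V" "k u = 0" using u KV k(3) by auto
        moreover have "h u \<noteq> 0" using u h(3) \<open>u \<in> V\<close> by auto
        moreover have "0 \<le> h u" using h(2) \<open>u \<in> V\<close> unfolding nonneg_on_def by auto
        ultimately have "r u \<noteq> 0" unfolding r_def by simp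
        then have HV: "H' \<noteq> V" unfolding H'_def using \<open>u \<in> V\<close> by auto
        have "H' \<inter> F = G \<inter> F"
          unfolding H'_def r_def using FK FV h(3) by auto
        then have "H' \<in> S" unfolding S_def using faceH HV GF by simp
        have GH: "G \<subseteq> H'" unfolding H'_def r_def using h(3) k(3) K by auto
        have "r v0 = 0" unfolding r_def using v0 kpos[OF v0(1)] by simp
        then have "v0 \<in> H'" unfolding H'_def using v0 W_def by auto
        moreover have "v0 \<notin> G" using v0 K unfolding W_def by auto
        ultimately have "G \<subset> H'" using GH by blast
        moreover have "finite H'" unfolding H'_def using finV by simp
        ultimately have "card G < card H'" by (simp add: psubset_card_mono)
        then show False using maxG[OF \<open>H' \<in> S\<close>] by simp
      next
        assume "{v\<in>F. k v = 0} = ZF"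
        then have "K \<inter> F = ZF" using k(3) FV by auto
        then have "K \<in> S" unfolding S_def using K by simp
        moreover have "card G < card K" using Gss finK by (simp add: psubset_card_mono)
        ultimately show False using maxG by fastforce
      qed
    qed
  qed
  have fdh: "facet_defining E V h" unfolding facet_defining_def using h facetG by simp
  have hF: "\<forall>v\<in>F. 0 \<le> h v" using h(2) FV unfolding nonneg_on_def by auto
  have "{v\<in>F. h v = 0} = ZF" using GF h(3) FV by auto
  then have "card (h ` F) = card (l' ` F)" using A[OF h(1) hF] by simp
  moreover have "card (h ` F) \<le> card (h ` V)" using FV finV by (intro card_mono) auto
  ultimately show ?thesis using fdh cardV' unfolding V'_def F_def by metis
qed


lemma bc0: "base_config {B\<in>Bs. e \<notin> B} = (\<lambda>v. v(e := 0)) ` {v\<in>base_config Bs. v e = 0}"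
proof -
  have "{v\<in>base_config Bs. v e = 0} = (\<lambda>B. indicator B) ` {B\<in>Bs. e \<notin> B}"
    unfolding base_config_def by (auto simp: indicator_def)
  moreover have "(\<lambda>v. v(e := 0)) ` ((\<lambda>B. indicator B :: 'a \<Rightarrow> real) ` {B\<in>Bs. e \<notin> B}) = (\<lambda>B. indicator B) ` {B\<in>Bs. e \<notin> B}"
  proof -
    have "(indicator B :: 'a \<Rightarrow> real)(e := 0) = indicator B" if "e \<notin> B" for B
      using that by (auto simp: indicator_def)
    then show ?thesis by (force simp: image_iff)
  qed
  ultimately show ?thesis unfolding base_config_def by simp
qed

lemma bc1: "base_config ((\<lambda>B. B - {e}) ` {B\<in>Bs. e \<in> B}) = (\<lambda>v. v(e := 0)) ` {v\<in>base_config Bs. v e = 1}"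
proof -
  have "{v\<in>base_config Bs. v e = 1} = (\<lambda>B. indicator B) ` {B\<in>Bs. e \<in> B}"
    unfolding base_config_def by (auto simp: indicator_def)
  moreover have ind: "(indicator B :: 'a \<Rightarrow> real)(e := 0) = indicator (B - {e})" for B
    by (auto simp: indicator_def)
  ultimately show ?thesis unfolding base_config_def by (simp add: image_image ind)
qed

lemma bc01: "\<forall>v\<in>base_config Bs. v e = 0 \<or> v e = 1"
  unfolding base_config_def by (auto simp: indicator_def)

lemma step_both:
  assumes "finite E" "e \<in> E" "finite V" "\<forall>v\<in>V. v e = 0 \<or> v e = 1" "c = 0 \<or> c = 1"
  shows "(Pth k E V \<longrightarrow> Pth k (E - {e}) ((\<lambda>v. v(e := 0)) ` {v\<in>V. v e = c}))
       \<and> (Plev k E V \<longrightarrow> Plev k (E - {e}) ((\<lambda>v. v(e := 0)) ` {v\<in>V. v e = c}))"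
proof (intro conjI impI)
  assume "Pth k E V" then show "Pth k (E - {e}) ((\<lambda>v. v(e := 0)) ` {v\<in>V. v e = c})"
    using step_theta[OF assms] by blast
next
  assume pl: "Plev k E V"
  show "Plev k (E - {e}) ((\<lambda>v. v(e := 0)) ` {v\<in>V. v e = c})"
    unfolding Plev_def
  proof (intro allI impI)
    fix l' assume "facet_defining (E - {e}) ((\<lambda>v. v(e := 0)) ` {v\<in>V. v e = c}) l'"
    from step_lev[OF assms this] obtain l where
      "facet_defining E V l" "card (l' ` ((\<lambda>v. v(e := 0)) ` {v\<in>V. v e = c})) \<le> card (l ` V)" by blast
    then show "card (l' ` ((\<lambda>v. v(e := 0)) ` {v\<in>V. v e = c})) \<le> k"
      using pl unfolding Plev_def by (meson order.trans)
  qed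
qed

lemma minor_inv:
  assumes "is_minor E Bs E' Bs'" "finite E" "finite Bs"
  shows "finite E' \<and> finite Bs' \<and> (Pth k E (base_config Bs) \<longrightarrow> Pth k E' (base_config Bs'))
     \<and> (Plev k E (base_config Bs) \<longrightarrow> Plev k E' (base_config Bs'))"
  using assms
proof (induction rule: is_minor.induct)
  case (refl E Bs) then show ?case by simp
next
  case (del E Bs E' Bs' e)
  then have IH: "finite E'" "finite Bs'" "Pth k E (base_config Bs) \<longrightarrow> Pth k E' (base_config Bs')"
     "Plev k E (base_config Bs) \<longrightarrow> Plev k E' (base_config Bs')" by auto
  have fV: "finite (base_config Bs')" unfolding base_config_def using IH by simp
  obtain c where c: "c = 0 \<or> c = (1::real)"
    "base_config (delete_bases Bs' e) = (\<lambda>v. v(e := 0)) ` {v\<in>base_config Bs'. v e = c}"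
  proof (cases "\<forall>B\<in>Bs'. e \<in> B")
    case True
    moreover have "{B\<in>Bs'. e \<in> B} = Bs'" using True by auto
    ultimately have "delete_bases Bs' e = (\<lambda>B. B - {e}) ` {B\<in>Bs'. e \<in> B}"
      unfolding delete_bases_def by simp
    then show ?thesis by (intro that[of 1]) (simp_all add: bc1)
  next
    case False
    then have "delete_bases Bs' e = {B\<in>Bs'. e \<notin> B}" unfolding delete_bases_def by auto
    then show ?thesis by (intro that[of 0]) (simp_all add: bc0)
  qed
  have fin2: "finite (delete_bases Bs' e)" unfolding delete_bases_def using IH by simp
  show ?case using step_both[OF IH(1) del.hyps(2) fV bc01 c(1), of k] IH c(2) fin2 by simp
next
  case (con E Bs E' Bs' e)
  then have IH: "finite E'" "finite Bs'" "Pth k E (base_config Bs) \<longrightarrow> Pth k E' (base_config Bs')"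
     "Plev k E (base_config Bs) \<longrightarrow> Plev k E' (base_config Bs')" by auto
  have fV: "finite (base_config Bs')" unfolding base_config_def using IH by simp
  obtain c where c: "c = 0 \<or> c = (1::real)"
    "base_config (contract_bases Bs' e) = (\<lambda>v. v(e := 0)) ` {v\<in>base_config Bs'. v e = c}"
  proof (cases "\<forall>B\<in>Bs'. e \<notin> B")
    case True
    then have "contract_bases Bs' e = {B\<in>Bs'. e \<notin> B}"
      unfolding contract_bases_def by auto
    then show ?thesis by (intro that[of 0]) (simp_all add: bc0)
  next
    case False
    then have "contract_bases Bs' e = (\<lambda>B. B - {e}) ` {B\<in>Bs'. e \<in> B}" unfolding contract_bases_def by auto
    then show ?thesis by (intro that[of 1]) (simp_all add: bc1)
  qed
  have fin2: "finite (contract_bases Bs' e)" unfolding contract_bases_def using IH by simp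
  show ?case using step_both[OF IH(1) con.hyps(2) fV bc01 c(1), of k] IH c(2) fin2 by simp
qed

theorem theorem2p11:
  fixes E :: "'a set" and \<B> :: "'a set set" and k :: nat
  assumes "matroid E \<B>"
  shows "(theta_rank E (base_config \<B>) \<le> k \<longrightarrow>
           (\<forall>E' \<B>'. is_minor E \<B> E' \<B>' \<longrightarrow> theta_rank E' (base_config \<B>') \<le> k))
       \<and> (levelness E (base_config \<B>) \<le> k \<longrightarrow>
           (\<forall>E' \<B>'. is_minor E \<B> E' \<B>' \<longrightarrow> levelness E' (base_config \<B>') \<le> k))"
proof -
  have finE: "finite E" and sub: "\<forall>B\<in>\<B>. B \<subseteq> E" using assms unfolding matroid_def by auto
  have finB: "finite \<B>" using finE sub by (meson Pow_iff finite_Pow_iff finite_subset subsetI)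
  have finV: "finite (base_config \<B>)" unfolding base_config_def using finB by simp
  have thdef: "theta_rank E V = (LEAST k. Pth k E V)" for E and V :: "('a \<Rightarrow> real) set"
    unfolding theta_rank_def Pth_def by simp
  have lvdef: "levelness E V = (LEAST k. Plev k E V)" for E and V :: "('a \<Rightarrow> real) set"
    unfolding levelness_def Plev_def by simp
  show ?thesis
  proof (intro conjI impI allI)
    fix E' \<B>' assume le: "theta_rank E (base_config \<B>) \<le> k" and m: "is_minor E \<B> E' \<B>'"
    have "Pth (theta_rank E (base_config \<B>)) E (base_config \<B>)"
      unfolding thdef by (rule LeastI[of "\<lambda>k. Pth k E (base_config \<B>)", OF Pth_ex[OF finE sub finB]])
    then have "Pth k E (base_config \<B>)" using le Pth_mono by blast
    then have "Pth k E' (base_config \<B>')" using minor_inv[OF m finE finB] by blast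
    then show "theta_rank E' (base_config \<B>') \<le> k" unfolding thdef by (rule Least_le)
  next
    fix E' \<B>' assume le: "levelness E (base_config \<B>) \<le> k" and m: "is_minor E \<B> E' \<B>'"
    have "Plev (levelness E (base_config \<B>)) E (base_config \<B>)"
      unfolding lvdef by (rule LeastI[of "\<lambda>k. Plev k E (base_config \<B>)", OF Plev_ex[OF finV]])
    then have "Plev k E (base_config \<B>)" using le Plev_mono by blast
    then have "Plev k E' (base_config \<B>')" using minor_inv[OF m finE finB] by blast
    then show "levelness E' (base_config \<B>') \<le> k" unfolding lvdef by (rule Least_le)
  qed
qed

end
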